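(* Let $Q=(q_1,\ldots,q_k)$ be an instance of the FIFO stack-up problem, let $n$ be the total number of bins in $Q$, and let $(Q,Q_0),(Q,Q_1),\ldots,(Q,Q_n)$ with $Q_0=Q$ and $Q_n=(\emptyset,\ldots,\emptyset)$ be a processing of $Q$ with $p$ stack-up places (i.e. $|\mathit{open}(Q,Q_i)|\le p$ for all $0\le i\le n$). Then the sequence $\mathcal{X}=(\mathit{open}(Q,Q_0),\ldots,\mathit{open}(Q,Q_n))$ is a directed path-decomposition of the sequence graph $G_Q$ of width at most $p-1$.
   Context: A bin $b$ carries a pallet symbol $\mathit{plt}(b)$ (a positive integer); bin $b$ is destined for pallet $\mathit{plt}(b)$. An instance is a list $Q=(q_1,\ldots,q_k)$ of finite sequences of bins, all bins (across all sequences) pairwise distinct; it is assumed that for every pallet symbol occurring, the sequences together contain at least two bins destined for it. $\mathit{plts}(Q)$ is the set of pallet symbols of all bins in $Q$. A subsequence of $q=(b_1,\ldots,b_n)$ is a suffix $q'=(b_j,\ldots,b_n)$, $j\ge 1$ (possibly empty), and $q-q'=(b_1,\ldots,b_{j-1})$. A configuration is a pair $(Q,Q')$ with $Q'=(q'_1,\ldots,q'_k)$, each $q'_j$ a subsequence of $q_j$. A pallet $t$ is open in $(Q,Q')$ if some bin destined for $t$ lies in some $q'_i$ and some bin destined for $t$ lies in some $q_j-q'_j$; $\mathit{open}(Q,Q')$ denotes the set of open pallets. A transformation step removes the first bin of one nonempty $q'_i$. A processing of $Q$ is a sequence of configurations $(Q,Q_0),\ldots,(Q,Q_n)$ with $Q_0=Q$,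 $Q_n$ consisting of $k$ empty sequences, each obtained from the previous by one transformation step; it uses $p$ stack-up places if every configuration has at most $p$ open pallets. The sequence graph $G_Q=(V,E)$ has $V=\mathit{plts}(Q)$ and an arc $(u,v)$ iff $u\ne v$ and some sequence $q_i$ contains a bin destined for $u$ at a position strictly before a bin destined for $v$. A directed path-decomposition of a digraph $G=(V,E)$ is a sequence $(X_1,\ldots,X_r)$ of subsets of $V$ with: (1) $X_1\cup\cdots\cup X_r=V$; (2) for every arc $(u,v)\in E$ there are $i\le j$ with $u\in X_i$, $v\in X_j$; (3) if $u\in X_i$ and $u\in X_j$ with $i\le j$ then $u\in X_l$ for all $i\le l\le j$. Its width is $\max_i |X_i|-1$. *)

theory Defs
  imports Main
begin

text \<open>Bins are elements of an arbitrary type 'b; the pallet symbol of a bin is given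
by a function plt. An instance is a list of lists of bins; a configuration Q'
is a list of the remaining suffixes.\<close>

definition plts :: "('b \<Rightarrow> nat) \<Rightarrow> 'b list list \<Rightarrow> nat set" where
  "plts plt Q = plt ` set (concat Q)"

definition is_instance :: "('b \<Rightarrow> nat) \<Rightarrow> 'b list list \<Rightarrow> bool" where
  "is_instance plt Q \<longleftrightarrow>
     distinct (concat Q) \<and>
     (\<forall>b \<in> set (concat Q). plt b > 0) \<and>
     (\<forall>t \<in> plts plt Q. card {b \<in> set (concat Q). plt b = t} \<ge> 2)"

text \<open>q - q' : the removed prefix of q, where q' is a suffix of q.\<close>
definition seq_minus :: "'b list \<Rightarrow> 'b list \<Rightarrow> 'b list" where
  "seq_minus q q' = take (length q - length q') q"

definition is_configuration :: "'b list list \<Rightarrow> 'b list list \<Rightarrow> bool" where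
  "is_configuration Q Q' \<longleftrightarrow> length Q' = length Q \<and>
     (\<forall>i < length Q. \<exists>j. Q' ! i = drop j (Q ! i))"

definition open_plts :: "('b \<Rightarrow> nat) \<Rightarrow> 'b list list \<Rightarrow> 'b list list \<Rightarrow> nat set" where
  "open_plts plt Q Q' = {t.
      (\<exists>i < length Q. \<exists>b \<in> set (Q' ! i). plt b = t) \<and>
      (\<exists>j < length Q. \<exists>b \<in> set (seq_minus (Q ! j) (Q' ! j)). plt b = t)}"

definition trans_step :: "'b list list \<Rightarrow> 'b list list \<Rightarrow> bool" where
  "trans_step Q1 Q2 \<longleftrightarrow> (\<exists>i < length Q1. Q1 ! i \<noteq> [] \<and> Q2 = Q1[i := tl (Q1 ! i)])"

text \<open>A processing of Q: the list (Q_0,...,Q_n) of second components of configurations.\<close>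
definition is_processing :: "'b list list \<Rightarrow> 'b list list list \<Rightarrow> bool" where
  "is_processing Q Qs \<longleftrightarrow> Qs \<noteq> [] \<and> Qs ! 0 = Q \<and>
     Qs ! (length Qs - 1) = replicate (length Q) [] \<and>
     (\<forall>i. Suc i < length Qs \<longrightarrow> trans_step (Qs ! i) (Qs ! Suc i))"

definition uses_places :: "('b \<Rightarrow> nat) \<Rightarrow> 'b list list \<Rightarrow> 'b list list list \<Rightarrow> nat \<Rightarrow> bool" where
  "uses_places plt Q Qs p \<longleftrightarrow> (\<forall>i < length Qs. card (open_plts plt Q (Qs ! i)) \<le> p)"

text \<open>Arcs of the sequence graph G_Q (vertex set plts plt Q).\<close>
definition seq_graph_arcs :: "('b \<Rightarrow> nat) \<Rightarrow> 'b list list \<Rightarrow> (nat \<times> nat) set" where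
  "seq_graph_arcs plt Q = {(u, v). u \<noteq> v \<and>
     (\<exists>q \<in> set Q. \<exists>i j. i < j \<and> j < length q \<and> plt (q ! i) = u \<and> plt (q ! j) = v)}"

definition directed_path_decomposition :: "'a set \<Rightarrow> ('a \<times> 'a) set \<Rightarrow> 'a set list \<Rightarrow> bool" where
  "directed_path_decomposition V E Xs \<longleftrightarrow>
     Xs \<noteq> [] \<and>
     \<Union> (set Xs) = V \<and>
     (\<forall>(u, v) \<in> E. \<exists>i j. i \<le> j \<and> j < length Xs \<and> u \<in> Xs ! i \<and> v \<in> Xs ! j) \<and>
     (\<forall>u i j l. i \<le> l \<and> l \<le> j \<and> j < length Xs \<and> u \<in> Xs ! i \<and> u \<in> Xs ! j \<longrightarrow> u \<in> Xs ! l)"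

definition dpd_width :: "'a set list \<Rightarrow> int" where
  "dpd_width Xs = int (Max (card ` set Xs)) - 1"

end

theory Submission
  imports Defs
begin

lemma DJ: "distinct (concat Q) \<Longrightarrow> j < length Q \<Longrightarrow> j' < length Q \<Longrightarrow> j \<noteq> j'
  \<Longrightarrow> x \<in> set (Q!j) \<Longrightarrow> x \<in> set (Q!j') \<Longrightarrow> False"
proof (induction Q arbitrary: j j')
  case Nil then show ?case by simp
next
  case (Cons q Q)
  show ?case
  proof (cases j)
    case 0
    then obtain j2 where "j' = Suc j2" using Cons by (cases j') auto
    have m: "Q!j2 \<in> set Q" using Cons \<open>j' = Suc j2\<close> by simp
    have "x \<in> set q" "x \<in> set (Q!j2)" using Cons 0 \<open>j' = Suc j2\<close> by auto
    moreover have "set q \<inter> \<Union> (set ` set Q) = {}" using Cons.prems(1) by simp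
    ultimately show ?thesis using m by blast
  next
    case (Suc j1)
    show ?thesis
    proof (cases j')
      case 0
      have m: "Q!j1 \<in> set Q" using Cons Suc by simp
      have "x \<in> set q" "x \<in> set (Q!j1)" using Cons 0 Suc by auto
      moreover have "set q \<inter> \<Union> (set ` set Q) = {}" using Cons.prems(1) by simp
      ultimately show ?thesis using m by blast
    next
      case (Suc j2) then show ?thesis using Cons \<open>j = Suc j1\<close> by auto
    qed
  qed
qed

lemma distinct_nth_concat: "distinct (concat Q) \<Longrightarrow> j < length Q \<Longrightarrow> distinct (Q!j)"
  by (metis distinct_concat_iff nth_mem)

lemma in_concat_nth: "x \<in> set (l!j) \<Longrightarrow> j < length l \<Longrightarrow> x \<in> set (concat l)"
  by (metis UnionI image_eqI nth_mem set_concat)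

lemma concat_nth_ex: "x \<in> set (concat l) \<Longrightarrow> \<exists>j<length l. x \<in> set (l!j)"
  by (metis UnionE imageE in_set_conv_nth set_concat)

lemma upd_sub: "set (concat (l[k := tl (l!k)])) \<subseteq> set (concat l)"
proof
  fix x assume "x \<in> set (concat (l[k := tl (l!k)]))"
  then obtain j where j: "j < length l" "x \<in> set (l[k := tl (l!k)] ! j)"
    using concat_nth_ex by fastforce
  show "x \<in> set (concat l)"
  proof (cases "j = k")
    case True
    then have "x \<in> set (tl (l!k))" using j by auto
    then have "x \<in> set (l!k)" by (metis list.sel(2) list.set_sel(2))
    then show ?thesis using j True by (auto intro: in_concat_nth)
  next
    case False then show ?thesis using j by (auto intro: in_concat_nth)
  qed
qed

lemma upd_sup: "k < length l \<Longrightarrow> l!k \<noteq> [] \<Longrightarrow> set (concat l) - {hd (l!k)} \<subseteq> set (concat (l[k := tl (l!k)]))"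
proof
  fix x assume k: "k < length l" "l!k \<noteq> []" and x: "x \<in> set (concat l) - {hd (l!k)}"
  then obtain j where j: "j < length l" "x \<in> set (l ! j)"
    using concat_nth_ex by fastforce
  show "x \<in> set (concat (l[k := tl (l!k)]))"
  proof (cases "j = k")
    case True
    then have "x \<in> set (tl (l!k))" using j x k by (metis DiffE insertCI list.collapse set_ConsD)
    then show ?thesis using True j by (intro in_concat_nth[of _ _ k]) auto
  next
    case False then show ?thesis using j by (intro in_concat_nth[of _ _ j]) auto
  qed
qed

lemma two_ex: "2 \<le> card A \<Longrightarrow> \<exists>a\<in>A. \<exists>b\<in>A. a \<noteq> b"
proof (rule ccontr)
  assume a: "2 \<le> card A" "\<not> (\<exists>a\<in>A. \<exists>b\<in>A. a \<noteq> b)"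
  then have "finite A" by (metis card.infinite not_numeral_le_zero)
  then have "card A \<le> Suc 0" using card_le_Suc0_iff_eq a(2) by blast
  then show False using a(1) by simp
qed

lemma A1:
  assumes S0: "S 0 = B" and step: "\<And>i. i < n \<Longrightarrow> \<exists>x. S i - {x} \<subseteq> S (Suc i)"
    and b1: "b1 \<in> B" "b2 \<in> B" "b1 \<noteq> b2" "plt b1 = t" "plt b2 = t"
  shows "m \<le> n \<Longrightarrow> (\<exists>b\<in>B - S m. plt b = t) \<Longrightarrow>
     \<exists>i\<le>m. (\<exists>b\<in>S i. plt b = t) \<and> (\<exists>b\<in>B - S i. plt b = t)"
proof (induction m)
  case 0 then show ?case using S0 by auto
next
  case (Suc m)
  show ?case
  proof (cases "\<exists>b\<in>B - S m. plt b = t")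
    case True
    with Suc obtain i where "i \<le> m" "(\<exists>b\<in>S i. plt b = t) \<and> (\<exists>b\<in>B - S i. plt b = t)" by auto
    then show ?thesis by (intro exI[of _ i]) auto
  next
    case False
    obtain x where x: "S m - {x} \<subseteq> S (Suc m)" using step[of m] Suc.prems(1) by (auto simp: Suc_le_eq)
    from Suc.prems obtain b where b: "b \<in> B - S (Suc m)" "plt b = t" by auto
    have "b \<in> S m" using False b by auto
    hence bx: "b = x" using x b by auto
    have "b1 \<in> S m" "b2 \<in> S m" using False b1 by auto
    obtain b' where b': "b' \<in> {b1,b2}" "b' \<noteq> x" using b1(3) by auto
    then have "b' \<in> S (Suc m)" using x \<open>b1 \<in> S m\<close> \<open>b2 \<in> S m\<close> by auto
    moreover have "plt b' = t" using b' b1 by auto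
    ultimately show ?thesis using b by (intro exI[of _ "Suc m"]) auto
  qed
qed

lemma A2:
  assumes Sn: "S n = {}" and SB: "\<And>i. i \<le> n \<Longrightarrow> S i \<subseteq> B"
    and step: "\<And>i. i < n \<Longrightarrow> \<exists>x. S i - {x} \<subseteq> S (Suc i)"
    and b1: "b1 \<in> B" "b2 \<in> B" "b1 \<noteq> b2" "plt b1 = t" "plt b2 = t"
    and m: "m \<le> n"
  shows "(\<exists>b\<in>S m. plt b = t) \<longrightarrow>
     (\<exists>j. m \<le> j \<and> j \<le> n \<and> (\<exists>b\<in>S j. plt b = t) \<and> (\<exists>b\<in>B - S j. plt b = t))"
  using m
proof (induction m rule: inc_induct)
  case base then show ?case using Sn by auto
next
  case (step m)
  show ?case
  proof
    assume h: "\<exists>b\<in>S m. plt b = t"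
    show "\<exists>j. m \<le> j \<and> j \<le> n \<and> (\<exists>b\<in>S j. plt b = t) \<and> (\<exists>b\<in>B - S j. plt b = t)"
    proof (cases "\<exists>b\<in>S (Suc m). plt b = t")
      case True
      with step.IH obtain j where "Suc m \<le> j \<and> j \<le> n \<and> (\<exists>b\<in>S j. plt b = t) \<and> (\<exists>b\<in>B - S j. plt b = t)"
        by auto
      then show ?thesis by (intro exI[of _ j]) auto
    next
      case False
      obtain x where x: "S m - {x} \<subseteq> S (Suc m)" using assms(3)[of m] step.hyps by auto
      from h obtain b where b: "b \<in> S m" "plt b = t" by auto
      have bx: "b = x" using x b False by auto
      obtain b' where b': "b' \<in> {b1,b2}" "b' \<noteq> x" using b1(3) by auto
      have "plt b' = t" using b' b1 by auto
      then have "b' \<notin> S m" using x False b' by auto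
      moreover have "b' \<in> B" using b' b1 by auto
      ultimately show ?thesis using b step.hyps \<open>plt b' = t\<close> by (intro exI[of _ m]) auto
    qed
  qed
qed

lemma ex_switch: "P (0::nat) \<Longrightarrow> \<not> P n \<Longrightarrow> \<exists>m<n. P m \<and> \<not> P (Suc m)"
proof (induction n)
  case 0 then show ?case by simp
next
  case (Suc n)
  show ?case
  proof (cases "P n")
    case True then show ?thesis using Suc by auto
  next
    case False then show ?thesis using Suc by (metis less_SucI)
  qed
qed


lemma open_eq:
  assumes d: "distinct (concat Q)" and l: "length Q' = length Q"
    and dr: "\<forall>j<length Q. \<exists>c. Q'!j = drop c (Q!j)"
  shows "open_plts plt Q Q' = {t. (\<exists>b\<in>set (concat Q'). plt b = t) \<and>
            (\<exists>b\<in>set (concat Q) - set (concat Q'). plt b = t)}"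
proof -
  have e1: "(\<exists>i < length Q. \<exists>b \<in> set (Q' ! i). plt b = t) \<longleftrightarrow> (\<exists>b\<in>set (concat Q'). plt b = t)" for t
  proof
    assume "\<exists>i < length Q. \<exists>b \<in> set (Q' ! i). plt b = t"
    then obtain i b where i: "i < length Q" "b \<in> set (Q'!i)" "plt b = t" by blast
    have "i < length Q'" using i l by simp
    then have "b \<in> set (concat Q')" using in_concat_nth[OF i(2)] by simp
    then show "\<exists>b\<in>set (concat Q'). plt b = t" using i(3) by blast
  next
    assume "\<exists>b\<in>set (concat Q'). plt b = t"
    then obtain b where "b \<in> set (concat Q')" "plt b = t" by blast
    then obtain i where "i < length Q'" "b \<in> set (Q'!i)" using concat_nth_ex[of b Q'] by blast
    moreover have "i < length Q" using \<open>i < length Q'\<close> l by simp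
    ultimately show "\<exists>i < length Q. \<exists>b \<in> set (Q' ! i). plt b = t" using \<open>plt b = t\<close> by blast
  qed
  have e2: "(\<exists>j<length Q. b \<in> set (seq_minus (Q!j) (Q'!j))) \<longleftrightarrow>
        b \<in> set (concat Q) - set (concat Q')" for b
  proof
    assume "\<exists>j<length Q. b \<in> set (seq_minus (Q!j) (Q'!j))"
    then obtain j where j: "j < length Q" "b \<in> set (seq_minus (Q!j) (Q'!j))" by auto
    obtain c where c: "Q'!j = drop c (Q!j)" using dr j by auto
    have st: "seq_minus (Q!j) (Q'!j) = take c (Q!j)" unfolding seq_minus_def c
      by (cases "c \<le> length (Q!j)") auto
    have bQ: "b \<in> set (Q!j)" using j st by (metis in_set_takeD)
    have "b \<notin> set (concat Q')"
    proof
      assume "b \<in> set (concat Q')"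
      then obtain j' where j': "j' < length Q" "b \<in> set (Q'!j')" using l concat_nth_ex[of b Q'] by auto
      obtain c' where c': "Q'!j' = drop c' (Q!j')" using dr j' by auto
      have bQ': "b \<in> set (Q!j')" using j' c' by (metis in_set_dropD)
      show False
      proof (cases "j = j'")
        case True
        have "distinct (Q!j)" using d j distinct_nth_concat by auto
        then have "set (take c (Q!j)) \<inter> set (drop c (Q!j)) = {}"
          by (simp add: set_take_disj_set_drop_if_distinct)
        then show False using j st j'(2) c True by auto
      next
        case False show False using DJ[OF d j(1) j'(1) False bQ bQ'] .
      qed
    qed
    moreover have "b \<in> set (concat Q)" using in_concat_nth[OF bQ j(1)] .
    ultimately show "b \<in> set (concat Q) - set (concat Q')" by blast
  next
    assume b: "b \<in> set (concat Q) - set (concat Q')"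
    then obtain j where j: "j < length Q" "b \<in> set (Q!j)" using concat_nth_ex[of b Q] by auto
    obtain c where c: "Q'!j = drop c (Q!j)" using dr j by auto
    have st: "seq_minus (Q!j) (Q'!j) = take c (Q!j)" unfolding seq_minus_def c
      by (cases "c \<le> length (Q!j)") auto
    have "j < length Q'" using l j by simp
    then have "b \<notin> set (Q'!j)" using b in_concat_nth[of b Q' j] by blast
    moreover have "set (Q!j) = set (take c (Q!j)) \<union> set (drop c (Q!j))"
      by (metis append_take_drop_id set_append)
    moreover have "b \<notin> set (drop c (Q!j))" using c calculation(1) by simp
    ultimately have "b \<in> set (take c (Q!j))" using j(2) by blast
    then show "\<exists>j<length Q. b \<in> set (seq_minus (Q!j) (Q'!j))" using j st by auto
  qed
  have e3: "(\<exists>j<length Q. \<exists>b\<in>set (seq_minus (Q!j) (Q'!j)). plt b = t) \<longleftrightarrow>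
     (\<exists>b\<in>set (concat Q) - set (concat Q'). plt b = t)" for t
    using e2 by blast
  show ?thesis unfolding open_plts_def e1 e3 ..
qed

theorem theorem1:
  fixes plt :: "'b \<Rightarrow> nat" and Q :: "'b list list" and Qs :: "'b list list list" and p :: nat
  assumes "is_instance plt Q"
    and "length Qs = length (concat Q) + 1"
    and "is_processing Q Qs"
    and "uses_places plt Q Qs p"
  shows "directed_path_decomposition (plts plt Q) (seq_graph_arcs plt Q)
           (map (open_plts plt Q) Qs)
       \<and> dpd_width (map (open_plts plt Q) Qs) \<le> int p - 1"
proof -
  define n where "n = length (concat Q)"
  define B where "B = set (concat Q)"
  define S where "S i = set (concat (Qs!i))" for i
  define op where "op i = {t. (\<exists>b\<in>S i. plt b = t) \<and> (\<exists>b\<in>B - S i. plt b = t)}" for i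
  have d: "distinct (concat Q)" using assms(1) by (simp add: is_instance_def)
  have lQs: "length Qs = Suc n" using assms(2) n_def by simp
  have P0: "Qs!0 = Q" and Pn: "Qs!n = replicate (length Q) []"
    and Pst: "\<And>i. Suc i < length Qs \<Longrightarrow> trans_step (Qs!i) (Qs!Suc i)"
    using assms(3) lQs unfolding is_processing_def by auto
  have F1: "length (Qs!i) = length Q \<and> (\<forall>j<length Q. \<exists>c. Qs!i!j = drop c (Q!j))" if "i \<le> n" for i
    using that
  proof (induction i)
    case 0 then show ?case using P0 by (metis drop0)
  next
    case (Suc i)
    then have IH: "length (Qs!i) = length Q" "\<forall>j<length Q. \<exists>c. Qs!i!j = drop c (Q!j)" by auto
    obtain k where k: "k < length (Qs!i)" "Qs!i!k \<noteq> []" "Qs!Suc i = (Qs!i)[k := tl (Qs!i!k)]"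
      using Pst[of i] Suc.prems lQs unfolding trans_step_def by auto
    have "\<forall>j<length Q. \<exists>c. Qs!Suc i!j = drop c (Q!j)"
    proof (intro allI impI)
      fix j assume j: "j < length Q"
      obtain c where c: "Qs!i!j = drop c (Q!j)" using IH j by auto
      show "\<exists>c. Qs!Suc i!j = drop c (Q!j)"
      proof (cases "j = k")
        case True then show ?thesis using k c j IH by (intro exI[of _ "Suc c"]) (simp add: drop_Suc tl_drop)
      next
        case False then show ?thesis using k c by auto
      qed
    qed
    then show ?case using k IH by simp
  qed
  have Fstep: "\<exists>k<length (Qs!i). Qs!i!k \<noteq> [] \<and> Qs!Suc i = (Qs!i)[k := tl (Qs!i!k)]" if "i < n" for i
    using Pst[of i] that lQs unfolding trans_step_def by auto
  have S0: "S 0 = B" using P0 S_def B_def by simp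
  have Sn: "S n = {}" using Pn S_def by simp
  have SB: "S i \<subseteq> B" if il: "i \<le> n" for i
  proof
    fix x assume "x \<in> S i"
    then obtain j where j: "j < length (Qs!i)" "x \<in> set (Qs!i!j)" using concat_nth_ex[of x "Qs!i"] S_def by auto
    have jl: "j < length Q" using j F1[OF il] by simp
    then obtain c where "Qs!i!j = drop c (Q!j)" using F1[OF il] by auto
    then have "x \<in> set (Q!j)" using j by (metis in_set_dropD)
    moreover note jl
    ultimately show "x \<in> B" using B_def in_concat_nth by metis
  qed
  have Sx: "\<exists>x. S i - {x} \<subseteq> S (Suc i)" if "i < n" for i
    using Fstep[OF that] upd_sup S_def by metis
  have opeq: "open_plts plt Q (Qs!i) = op i" if "i \<le> n" for i
    using open_eq[OF d] F1[OF that] unfolding op_def S_def B_def by simp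
  have Xs: "map (open_plts plt Q) Qs ! i = op i" if "i < length Qs" for i
    using that opeq lQs by simp
  have two: "\<exists>b1 b2. b1 \<in> B \<and> b2 \<in> B \<and> b1 \<noteq> b2 \<and> plt b1 = t \<and> plt b2 = t" if "t \<in> plts plt Q" for t
  proof -
    have "card {b \<in> B. plt b = t} \<ge> 2" using assms(1) that B_def unfolding is_instance_def by auto
    then show ?thesis using two_ex by fastforce
  qed
  have L1: "\<exists>i\<le>m. t \<in> op i" if th: "t \<in> plts plt Q" "m \<le> n" "\<exists>b\<in>B - S m. plt b = t" for t m
  proof -
    obtain b1 b2 where "b1 \<in> B \<and> b2 \<in> B \<and> b1 \<noteq> b2 \<and> plt b1 = t \<and> plt b2 = t" using two th(1) by blast
    then show ?thesis using A1[of S B n b1 b2 plt t m] S0 Sx th unfolding op_def by auto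
  qed
  have L2: "\<exists>j. m \<le> j \<and> j \<le> n \<and> t \<in> op j" if th: "t \<in> plts plt Q" "m \<le> n" "\<exists>b\<in>S m. plt b = t" for t m
  proof -
    obtain b1 b2 where "b1 \<in> B \<and> b2 \<in> B \<and> b1 \<noteq> b2 \<and> plt b1 = t \<and> plt b2 = t" using two th(1) by blast
    then show ?thesis using A2[of S n B b1 b2 plt t m] Sn SB Sx th unfolding op_def by auto
  qed
  have opsub: "op i \<subseteq> plts plt Q" for i
  proof
    fix t assume "t \<in> op i"
    then obtain b where "b \<in> B" "plt b = t" unfolding op_def by auto
    then show "t \<in> plts plt Q" unfolding plts_def B_def by blast
  qed
  have G: "b \<in> set (Qs!m!j)" if gb: "b \<in> set (Q!j)" "j < length Q" "b \<in> S m" "m \<le> n" for b j m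
  proof -
    obtain j' where j': "j' < length (Qs!m)" "b \<in> set (Qs!m!j')" using gb concat_nth_ex[of b "Qs!m"] S_def by auto
    obtain c where c: "Qs!m!j' = drop c (Q!j')" using F1 gb j' by auto
    have "b \<in> set (Q!j')" using c j' by (metis in_set_dropD)
    then have "j' = j" using DJ[OF d] gb j' F1 by metis
    then show ?thesis using j' by simp
  qed
  have union: "\<Union> (set (map (open_plts plt Q) Qs)) = plts plt Q"
  proof
    show "\<Union> (set (map (open_plts plt Q) Qs)) \<subseteq> plts plt Q"
      using Xs opsub by (auto simp: in_set_conv_nth) blast
  next
    show "plts plt Q \<subseteq> \<Union> (set (map (open_plts plt Q) Qs))"
    proof
      fix t assume t: "t \<in> plts plt Q"
      then have "\<exists>b\<in>B - S n. plt b = t" using Sn unfolding plts_def B_def by auto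
      then obtain i where "i \<le> n" "t \<in> op i" using L1 t by blast
      then show "t \<in> \<Union> (set (map (open_plts plt Q) Qs))" using Xs[of i] lQs
        by (metis Suc_le_mono Suc_le_eq UnionI length_map nth_mem)
    qed
  qed
  have arcs: "\<exists>i j. i \<le> j \<and> j < length (map (open_plts plt Q) Qs) \<and>
      u \<in> map (open_plts plt Q) Qs ! i \<and> v \<in> map (open_plts plt Q) Qs ! j"
    if uv: "(u, v) \<in> seq_graph_arcs plt Q" for u v
  proof -
    obtain q a c where q: "q \<in> set Q" "a < c" "c < length q" "plt (q!a) = u" "plt (q!c) = v"
      using uv unfolding seq_graph_arcs_def by auto
    obtain jq where jq: "jq < length Q" "q = Q!jq" using q(1) by (metis in_set_conv_nth)
    have dq: "distinct q" using distinct_nth_concat[OF d jq(1)] jq by simp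
    have bvB: "q!c \<in> B" using q jq B_def by (metis in_concat_nth nth_mem)
    have buB: "q!a \<in> B" using q jq B_def by (metis in_concat_nth nth_mem order.strict_trans)
    obtain m where m: "m < n" "q!c \<in> S m" "q!c \<notin> S (Suc m)"
      using ex_switch[of "\<lambda>m. q!c \<in> S m" n] S0 Sn bvB by auto
    obtain cm where cm: "Qs!m!jq = drop cm q" using F1[of m] m jq by auto
    have bvm: "q!c \<in> set (Qs!m!jq)" using G[of "q!c" jq m] m jq q by simp
    obtain k where k: "k < length (Qs!m)" "Qs!m!k \<noteq> []" "Qs!Suc m = (Qs!m)[k := tl (Qs!m!k)]"
      using Fstep[OF m(1)] by auto
    have kjq: "k = jq"
    proof (rule ccontr)
      assume "k \<noteq> jq"
      then have "Qs!Suc m!jq = Qs!m!jq" using k by simp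
      then have "q!c \<in> S (Suc m)" using bvm F1[of "Suc m"] m jq S_def by (metis Suc_leI in_concat_nth)
      then show False using m by simp
    qed
    have nt: "q!c \<notin> set (tl (Qs!m!jq))"
    proof
      assume "q!c \<in> set (tl (Qs!m!jq))"
      then have "q!c \<in> set (Qs!Suc m!jq)" using k kjq by simp
      then have "q!c \<in> S (Suc m)" using F1[of "Suc m"] m jq S_def by (metis Suc_leI in_concat_nth)
      then show False using m by simp
    qed
    have "hd (Qs!m!jq) = q!c" using bvm nt by (cases "Qs!m!jq") auto
    moreover have "cm < length q" using k kjq cm by simp
    ultimately have "q!cm = q!c" using cm by (simp add: hd_drop_conv_nth)
    then have "cm = c" using dq q(3) \<open>cm < length q\<close> nth_eq_iff_index_eq by metis
    have "take c q ! a = q!a" "a < length (take c q)" using q by auto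
    then have "q!a \<in> set (take c q)" by (metis nth_mem)
    then have "q!a \<notin> set (drop c q)" using dq set_take_disj_set_drop_if_distinct[of q c c] by auto
    then have "q!a \<notin> S m" using G[of "q!a" jq m] cm \<open>cm = c\<close> m jq q by auto
    then have "\<exists>b\<in>B - S m. plt b = u" using buB q by auto
    moreover have "u \<in> plts plt Q" unfolding plts_def using buB q B_def by auto
    ultimately obtain i where i: "i \<le> m" "u \<in> op i" using L1[of u m] m by auto
    have "v \<in> plts plt Q" unfolding plts_def using bvB q B_def by auto
    then obtain j where j: "m \<le> j" "j \<le> n" "v \<in> op j"
      using L2[of v m] m bvB q by auto
    show ?thesis using i j Xs lQs by (intro exI[of _ i] exI[of _ j]) auto
  qed
  have interval: "u \<in> map (open_plts plt Q) Qs ! l"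
    if "i \<le> l" "l \<le> j" "j < length (map (open_plts plt Q) Qs)"
       "u \<in> map (open_plts plt Q) Qs ! i" "u \<in> map (open_plts plt Q) Qs ! j" for u i j l
  proof -
    have mono: "S b \<subseteq> S a" if "a \<le> b" "b \<le> n" for a b
      using that
    proof (induction b rule: dec_induct)
      case base then show ?case by simp
    next
      case (step b')
      have "S (Suc b') \<subseteq> S b'" using Fstep[of b'] step upd_sub S_def by (metis Suc_le_eq)
      then show ?case using step by auto
    qed
    have "u \<in> op i" "u \<in> op j" using that Xs lQs by auto
    then obtain b1 b2 where "b1 \<in> S j" "plt b1 = u" "b2 \<in> B - S i" "plt b2 = u" unfolding op_def by auto
    moreover have "S j \<subseteq> S l" "S l \<subseteq> S i" using mono that lQs by auto
    ultimately have "u \<in> op l" unfolding op_def by blast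
    then show ?thesis using Xs that by auto
  qed
  have dpd: "directed_path_decomposition (plts plt Q) (seq_graph_arcs plt Q) (map (open_plts plt Q) Qs)"
    unfolding directed_path_decomposition_def using lQs union arcs interval by fastforce
  have "Max (card ` set (map (open_plts plt Q) Qs)) \<le> p"
  proof (rule Max.boundedI)
    show "finite (card ` set (map (open_plts plt Q) Qs))" by simp
    show "card ` set (map (open_plts plt Q) Qs) \<noteq> {}" using lQs by auto
    fix x assume "x \<in> card ` set (map (open_plts plt Q) Qs)"
    then obtain i where "i < length Qs" "x = card (open_plts plt Q (Qs!i))"
      by (auto simp: in_set_conv_nth)
    then show "x \<le> p" using assms(4) unfolding uses_places_def by auto
  qed
  then have "dpd_width (map (open_plts plt Q) Qs) \<le> int p - 1" unfolding dpd_width_def by simp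
  then show ?thesis using dpd by simp
qed

end
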